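(* Let $V$ be a finite-dimensional irreducible $T$-module. Then (i) there exist nonnegative integers $r,\delta$ with $r+\delta\le d$ such that for $0\le i\le d$, $e^*_iV\ne0$ if and only if $r\le i\le r+\delta$; (ii) there exist nonnegative integers $t,\delta^*$ with $t+\delta^*\le d$ such that for $0\le i\le d$, $e_iV\ne0$ if and only if $t\le i\le t+\delta^*$.
   Context: $\mathbb{F}$ is a field, $d\ge0$, and $\{\theta_i\}_{i=0}^d$, $\{\theta^*_i\}_{i=0}^d$ are scalars in $\mathbb{F}$ with $\theta_i\ne\theta_j$, $\theta^*_i\ne\theta^*_j$ for $i\ne j$, such that $\frac{\theta_{i-2}-\theta_{i+1}}{\theta_{i-1}-\theta_i}$ and $\frac{\theta^*_{i-2}-\theta^*_{i+1}}{\theta^*_{i-1}-\theta^*_i}$ are equal and independent of $i$ for $2\le i\le d-1$. $T$ is the associative $\mathbb{F}$-algebra with $1$ generated by $a,e_0,\dots,e_d,a^*,e^*_0,\dots,e^*_d$ with relations $e_ie_j=\delta_{ij}e_i$, $e^*_ie^*_j=\delta_{ij}e^*_i$, $\sum_ie_i=\sum_ie^*_i=1$, $a=\sum_i\theta_ie_i$, $a^*=\sum_i\theta^*_ie^*_i$, and $e^*_ia^ke^*_j=0$, $e_i{a^*}^ke_j=0$ whenever $0\le i,j,k\le d$ and $k<|i-j|$. *)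

theory Defs
  imports Complex_Main
begin

definition TD_eigen_params :: "nat \<Rightarrow> (nat \<Rightarrow> 'a::field) \<Rightarrow> (nat \<Rightarrow> 'a) \<Rightarrow> bool" where
  "TD_eigen_params d th ths \<longleftrightarrow>
     (\<forall>i\<le>d. \<forall>j\<le>d. i \<noteq> j \<longrightarrow> th i \<noteq> th j) \<and>
     (\<forall>i\<le>d. \<forall>j\<le>d. i \<noteq> j \<longrightarrow> ths i \<noteq> ths j) \<and>
     (\<exists>\<beta>. \<forall>i. 2 \<le> i \<and> i + 1 \<le> d \<longrightarrow>
        (th (i-2) - th (i+1)) / (th (i-1) - th i) = \<beta> \<and>
        (ths (i-2) - ths (i+1)) / (ths (i-1) - ths i) = \<beta>)"

text \<open>A (unital) T-module: an F-vector space V (the type 'v with scalar multiplication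
  scale) together with linear operators A, E i, As, Es i (the actions of a, e_i, a*, e*_i,
  for 0 <= i <= d) satisfying the defining relations of T.\<close>
definition T_module ::
  "('a::field \<Rightarrow> 'v::ab_group_add \<Rightarrow> 'v) \<Rightarrow> nat \<Rightarrow> (nat \<Rightarrow> 'a) \<Rightarrow> (nat \<Rightarrow> 'a) \<Rightarrow>
   ('v \<Rightarrow> 'v) \<Rightarrow> (nat \<Rightarrow> 'v \<Rightarrow> 'v) \<Rightarrow> ('v \<Rightarrow> 'v) \<Rightarrow> (nat \<Rightarrow> 'v \<Rightarrow> 'v) \<Rightarrow> bool" where
  "T_module scale d th ths A E As Es \<longleftrightarrow>
     vector_space scale \<and>
     Vector_Spaces.linear scale scale A \<and> Vector_Spaces.linear scale scale As \<and>
     (\<forall>i\<le>d. Vector_Spaces.linear scale scale (E i) \<and> Vector_Spaces.linear scale scale (Es i)) \<and>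
     (\<forall>i\<le>d. \<forall>j\<le>d. E i \<circ> E j = (if i = j then E i else (\<lambda>_. 0))) \<and>
     (\<forall>i\<le>d. \<forall>j\<le>d. Es i \<circ> Es j = (if i = j then Es i else (\<lambda>_. 0))) \<and>
     (\<forall>v. (\<Sum>i\<le>d. E i v) = v) \<and>
     (\<forall>v. (\<Sum>i\<le>d. Es i v) = v) \<and>
     (\<forall>v. A v = (\<Sum>i\<le>d. scale (th i) (E i v))) \<and>
     (\<forall>v. As v = (\<Sum>i\<le>d. scale (ths i) (Es i v))) \<and>
     (\<forall>i\<le>d. \<forall>j\<le>d. \<forall>k\<le>d. int k < \<bar>int i - int j\<bar> \<longrightarrow>
        Es i \<circ> (A ^^ k) \<circ> Es j = (\<lambda>_. 0) \<and> E i \<circ> (As ^^ k) \<circ> E j = (\<lambda>_. 0))"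

definition finite_dim_space :: "('a::field \<Rightarrow> 'v::ab_group_add \<Rightarrow> 'v) \<Rightarrow> bool" where
  "finite_dim_space scale \<longleftrightarrow> (\<exists>B. finite B \<and> module.span scale B = UNIV)"

text \<open>Irreducible: V nonzero and the only T-submodules are 0 and V.
  A subspace is a T-submodule iff it is invariant under all the generators.\<close>
definition T_irreducible ::
  "('a::field \<Rightarrow> 'v::ab_group_add \<Rightarrow> 'v) \<Rightarrow> nat \<Rightarrow>
   ('v \<Rightarrow> 'v) \<Rightarrow> (nat \<Rightarrow> 'v \<Rightarrow> 'v) \<Rightarrow> ('v \<Rightarrow> 'v) \<Rightarrow> (nat \<Rightarrow> 'v \<Rightarrow> 'v) \<Rightarrow> bool" where
  "T_irreducible scale d A E As Es \<longleftrightarrow>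
     (\<exists>v::'v. v \<noteq> 0) \<and>
     (\<forall>W. module.subspace scale W \<and> A ` W \<subseteq> W \<and> As ` W \<subseteq> W \<and>
          (\<forall>i\<le>d. E i ` W \<subseteq> W \<and> Es i ` W \<subseteq> W)
          \<longrightarrow> W = {0} \<or> W = UNIV)"

end

theory Submission
  imports Defs
begin

lemma lin_facts:
  assumes "Vector_Spaces.linear s s f"
  shows "f (x + y) = f x + f y" "f (s c x) = s c (f x)" "f 0 = 0"
    "f (sum g S) = (\<Sum>a\<in>S. f (g a))" "f (x - y) = f x - f y"
proof -
  have m: "module_hom s s f" using assms by (simp add: linear_iff_module_hom)
  show "f (x + y) = f x + f y" by (rule module_hom.add[OF m])
  show "f (s c x) = s c (f x)" by (rule module_hom.scale[OF m])
  show "f 0 = 0" by (rule module_hom.zero[OF m])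
  show "f (sum g S) = (\<Sum>a\<in>S. f (g a))" by (rule module_hom.sum[OF m])
  show "f (x - y) = f x - f y" by (rule module_hom.diff[OF m])
qed

lemma proj_sum1:
  fixes d :: nat
  assumes vs: "vector_space scale"
    and PP: "\<forall>i\<le>d. \<forall>j\<le>d. P i \<circ> P j = (if i = j then P i else (\<lambda>_. 0))"
    and i: "i \<le> d"
  shows "(\<Sum>l\<le>d. scale (c l) (P l (P i v))) = scale (c i) (P i v)"
proof -
  interpret vector_space scale by fact
  have "\<And>l. l \<le> d \<Longrightarrow> scale (c l) (P l (P i v)) = (if l = i then scale (c i) (P i v) else 0)"
  proof -
    fix l assume l: "l \<le> d"
    have "P l (P i v) = (if l = i then P i v else 0)"
      using fun_cong[OF PP[rule_format, OF l i], of v] by (auto split: if_splits)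
    then show "scale (c l) (P l (P i v)) = (if l = i then scale (c i) (P i v) else 0)" by auto
  qed
  then have "(\<Sum>l\<le>d. scale (c l) (P l (P i v))) = (\<Sum>l\<le>d. (if l = i then scale (c i) (P i v) else 0))"
    by (intro sum.cong) auto
  also have "\<dots> = scale (c i) (P i v)" using i by (subst sum.delta) auto
  finally show ?thesis .
qed

lemma proj_sum2:
  fixes d :: nat
  assumes vs: "vector_space scale"
    and PP: "\<forall>i\<le>d. \<forall>j\<le>d. P i \<circ> P j = (if i = j then P i else (\<lambda>_. 0))"
    and lin: "Vector_Spaces.linear scale scale (P i)"
    and i: "i \<le> d"
  shows "P i (\<Sum>l\<le>d. scale (c l) (P l v)) = scale (c i) (P i v)"
proof -
  interpret vector_space scale by fact
  have "P i (\<Sum>l\<le>d. scale (c l) (P l v)) = (\<Sum>l\<le>d. scale (c l) (P i (P l v)))"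
    by (simp add: lin_facts[OF lin])
  also have "\<dots> = (\<Sum>l\<le>d. (if l = i then scale (c i) (P i v) else 0))"
  proof (rule sum.cong[OF refl])
    fix l assume "l \<in> {..d}"
    then have l: "l \<le> d" by simp
    have "P i (P l v) = (if l = i then P i v else 0)"
      using fun_cong[OF PP[rule_format, OF i l], of v] by (auto split: if_splits)
    then show "scale (c l) (P i (P l v)) = (if l = i then scale (c i) (P i v) else 0)"
      by auto
  qed
  also have "\<dots> = scale (c i) (P i v)" using i by (subst sum.delta) auto
  finally show ?thesis .
qed

fun Fp :: "('a::field \<Rightarrow> 'v::ab_group_add \<Rightarrow> 'v) \<Rightarrow> ('v \<Rightarrow> 'v) \<Rightarrow> (nat \<Rightarrow> 'a) \<Rightarrow> nat list \<Rightarrow> 'v \<Rightarrow> 'v" where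
  "Fp scale A th [] v = v"
| "Fp scale A th (k # ks) v = A (Fp scale A th ks v) - scale (th k) (Fp scale A th ks v)"

lemma Fp_W:
  assumes vs: "vector_space scale" and W: "module.subspace scale W" and AW: "A ` W \<subseteq> W"
    and v: "v \<in> W"
  shows "Fp scale A th ks v \<in> W"
proof (induction ks)
  case Nil then show ?case using v by simp
next
  case (Cons k ks)
  interpret vector_space scale by fact
  show ?case using Cons AW W
    by (auto intro!: subspace_diff subspace_scale)
qed

lemma Fp_eq:
  fixes d :: nat
  assumes vs: "vector_space scale"
    and linA: "Vector_Spaces.linear scale scale A"
    and EE: "\<forall>i\<le>d. \<forall>j\<le>d. E i \<circ> E j = (if i = j then E i else (\<lambda>_. 0))"
    and sumE: "\<forall>v. (\<Sum>i\<le>d. E i v) = v"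
    and Adef: "\<forall>v. A v = (\<Sum>i\<le>d. scale (th i) (E i v))"
  shows "Fp scale A th ks v = (\<Sum>i\<le>d. scale (prod_list (map (\<lambda>k. th i - th k) ks)) (E i v))"
proof -
  interpret vector_space scale by fact
  show ?thesis
proof (induction ks)
  case Nil then show ?case using sumE by simp
next
  case (Cons k ks)
  let ?c = "\<lambda>i. prod_list (map (\<lambda>k. th i - th k) ks)"
  have AE: "\<And>i. i \<le> d \<Longrightarrow> A (E i v) = scale (th i) (E i v)"
    using Adef proj_sum1[OF vs EE] by simp
  have "A (Fp scale A th ks v) = (\<Sum>i\<le>d. scale (?c i) (A (E i v)))"
    using Cons by (simp add: lin_facts[OF linA])
  also have "\<dots> = (\<Sum>i\<le>d. scale (?c i * th i) (E i v))"
    using AE by (intro sum.cong) auto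
  finally have 1: "A (Fp scale A th ks v) = (\<Sum>i\<le>d. scale (?c i * th i) (E i v))" .
  have "Fp scale A th (k # ks) v = (\<Sum>i\<le>d. scale (?c i * th i) (E i v)) - (\<Sum>i\<le>d. scale (th k * ?c i) (E i v))"
    using 1 Cons by (simp add: scale_sum_right)
  also have "\<dots> = (\<Sum>i\<le>d. scale ((th i - th k) * ?c i) (E i v))"
    by (simp add: sum_subtractf[symmetric] algebra_simps)
  finally show ?case by simp
qed
qed

lemma E_inv:
  fixes d :: nat
  assumes vs: "vector_space scale"
    and linA: "Vector_Spaces.linear scale scale A"
    and EE: "\<forall>i\<le>d. \<forall>j\<le>d. E i \<circ> E j = (if i = j then E i else (\<lambda>_. 0))"
    and sumE: "\<forall>v. (\<Sum>i\<le>d. E i v) = v"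
    and Adef: "\<forall>v. A v = (\<Sum>i\<le>d. scale (th i) (E i v))"
    and dist: "\<forall>i\<le>d. \<forall>j\<le>d. i \<noteq> j \<longrightarrow> th i \<noteq> th j"
    and W: "module.subspace scale W" and AW: "A ` W \<subseteq> W"
    and j: "j \<le> d" and v: "v \<in> W"
  shows "E j v \<in> W"
proof -
  interpret vector_space scale by fact
  define ks where "ks = filter (\<lambda>k. k \<noteq> j) [0..<Suc d]"
  define c where "c = (\<lambda>i. prod_list (map (\<lambda>k. th i - th k) ks))"
  have setks: "set ks = {k. k \<le> d \<and> k \<noteq> j}" unfolding ks_def by auto
  have c0: "\<And>i. i \<le> d \<Longrightarrow> i \<noteq> j \<Longrightarrow> c i = 0"
    unfolding c_def prod_list_zero_iff using setks by force
  have cj: "c j \<noteq> 0"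
    unfolding c_def prod_list_zero_iff using setks dist j by force
  have "Fp scale A th ks v = (\<Sum>i\<le>d. scale (c i) (E i v))"
    unfolding c_def by (rule Fp_eq[OF vs linA EE sumE Adef])
  also have "\<dots> = (\<Sum>i\<le>d. if i = j then scale (c j) (E j v) else 0)"
    using c0 by (intro sum.cong) auto
  also have "\<dots> = scale (c j) (E j v)" using j by (subst sum.delta) auto
  finally have "Fp scale A th ks v = scale (c j) (E j v)" .
  then have "E j v = scale (inverse (c j)) (Fp scale A th ks v)"
    using cj by simp
  moreover have "Fp scale A th ks v \<in> W" by (rule Fp_W[OF vs W AW v])
  ultimately show ?thesis using W by (simp add: subspace_scale)
qed

lemma part1:
  fixes d :: nat
  assumes vs: "vector_space scale"
    and linA: "Vector_Spaces.linear scale scale A"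
    and linE: "\<forall>i\<le>d. Vector_Spaces.linear scale scale (E i)"
    and linEs: "\<forall>i\<le>d. Vector_Spaces.linear scale scale (Es i)"
    and EE: "\<forall>i\<le>d. \<forall>j\<le>d. E i \<circ> E j = (if i = j then E i else (\<lambda>_. 0))"
    and EsEs: "\<forall>i\<le>d. \<forall>j\<le>d. Es i \<circ> Es j = (if i = j then Es i else (\<lambda>_. 0))"
    and sumE: "\<forall>v. (\<Sum>i\<le>d. E i v) = v"
    and sumEs: "\<forall>v. (\<Sum>i\<le>d. Es i v) = v"
    and Adef: "\<forall>v. A v = (\<Sum>i\<le>d. scale (th i) (E i v))"
    and Asdef: "\<forall>v. As v = (\<Sum>i\<le>d. scale (ths i) (Es i v))"
    and tri: "\<forall>i\<le>d. \<forall>j\<le>d. 1 < \<bar>int i - int j\<bar> \<longrightarrow> Es i \<circ> A \<circ> Es j = (\<lambda>_. 0)"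
    and dist: "\<forall>i\<le>d. \<forall>j\<le>d. i \<noteq> j \<longrightarrow> th i \<noteq> th j"
    and irr: "T_irreducible scale d A E As Es"
  shows "\<exists>r \<delta>::nat. r + \<delta> \<le> d \<and>
            (\<forall>i\<le>d. (\<exists>v. Es i v \<noteq> 0) \<longleftrightarrow> r \<le> i \<and> i \<le> r + \<delta>)"
proof -
  interpret vector_space scale by fact
  define P where "P i \<longleftrightarrow> (\<exists>v. Es i v \<noteq> 0)" for i
  obtain v0 where v0: "v0 \<noteq> (0::'b)" using irr unfolding T_irreducible_def by auto
  have "\<exists>i\<le>d. P i"
  proof (rule ccontr)
    assume "\<not> ?thesis"
    then have "\<forall>i\<le>d. Es i v0 = 0" unfolding P_def by auto
    then have "(\<Sum>i\<le>d. Es i v0) = 0" by simp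
    then show False using sumEs v0 by simp
  qed
  define r where "r = (LEAST i. i \<le> d \<and> P i)"
  have r: "r \<le> d" "P r" using LeastI_ex[OF \<open>\<exists>i\<le>d. P i\<close>] unfolding r_def by auto
  have below: "\<And>i. i < r \<Longrightarrow> \<not> P i"
    using not_less_Least r(1) unfolding r_def by fastforce
  define Q where "Q \<delta> \<longleftrightarrow> r + \<delta> \<le> d \<and> (\<forall>i. r \<le> i \<and> i \<le> r + \<delta> \<longrightarrow> P i)" for \<delta>
  have Q0: "Q 0" unfolding Q_def using r by (auto intro: le_antisym)
  have Qb: "\<And>y. Q y \<Longrightarrow> y \<le> d" unfolding Q_def by auto
  define \<delta> where "\<delta> = (GREATEST y. Q y)"
  have Qd: "Q \<delta>" unfolding \<delta>_def by (rule GreatestI_nat[where P=Q, OF Q0 Qb])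
  have Qg: "\<And>y. Q y \<Longrightarrow> y \<le> \<delta>" unfolding \<delta>_def by (rule Greatest_le_nat[where P=Q, OF _ Qb])
  have above: "r + \<delta> + 1 \<le> d \<Longrightarrow> \<not> P (r + \<delta> + 1)"
  proof
    assume a: "r + \<delta> + 1 \<le> d" "P (r + \<delta> + 1)"
    have "Q (\<delta> + 1)" unfolding Q_def using a Qd unfolding Q_def
      by (metis add.assoc le_Suc_eq Suc_eq_plus1)
    then show False using Qg by fastforce
  qed
  have zeroP: "\<And>i w. \<not> P i \<Longrightarrow> Es i w = 0" unfolding P_def by auto
  define W where "W = {v. \<forall>i\<le>d. Es i v \<noteq> 0 \<longrightarrow> r \<le> i \<and> i \<le> r + \<delta>}"
  have Wsub: "subspace W"
  proof -
    have a: "\<And>i x y. i \<le> d \<Longrightarrow> Es i (x + y) = Es i x + Es i y"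
      and b: "\<And>i c x. i \<le> d \<Longrightarrow> Es i (scale c x) = scale c (Es i x)"
      and z: "\<And>i. i \<le> d \<Longrightarrow> Es i 0 = 0"
      using linEs lin_facts by blast+
    show ?thesis unfolding subspace_def W_def
    proof (intro conjI ballI allI impI; clarsimp)
      fix x y i assume x: "\<forall>i\<le>d. Es i x \<noteq> 0 \<longrightarrow> r \<le> i \<and> i \<le> r + \<delta>"
        and y: "\<forall>i\<le>d. Es i y \<noteq> 0 \<longrightarrow> r \<le> i \<and> i \<le> r + \<delta>" and i: "i \<le> d"
        and nz: "Es i (x + y) \<noteq> 0"
      then have "Es i x \<noteq> 0 \<or> Es i y \<noteq> 0" using a by auto
      then show "r \<le> i \<and> i \<le> r + \<delta>" using x y i by auto
    qed (use b z in auto)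
  qed
  have EsW: "\<And>j. j \<le> d \<Longrightarrow> Es j ` W \<subseteq> W"
  proof
    fix j x assume j: "j \<le> d" and x: "x \<in> Es j ` W"
    then obtain v where v: "v \<in> W" "x = Es j v" by auto
    show "x \<in> W" unfolding W_def
    proof (intro CollectI allI impI)
      fix i assume i: "i \<le> d" and nz: "Es i x \<noteq> 0"
      have "Es i x = (if i = j then Es j v else 0)"
        using fun_cong[OF EsEs[rule_format, OF i j], of v] v(2) by (auto split: if_splits)
      then show "r \<le> i \<and> i \<le> r + \<delta>" using nz v(1) i unfolding W_def by (auto split: if_splits)
    qed
  qed
  have AsW: "As ` W \<subseteq> W"
  proof
    fix x assume "x \<in> As ` W"
    then obtain v where v: "v \<in> W" "x = As v" by auto
    show "x \<in> W" unfolding W_def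
    proof (intro CollectI allI impI)
      fix i assume i: "i \<le> d" and nz: "Es i x \<noteq> 0"
      have "Es i x = scale (ths i) (Es i v)"
        using v(2) Asdef proj_sum2[OF vs EsEs linEs[rule_format, OF i] i] by simp
      then have "Es i v \<noteq> 0" using nz by auto
      then show "r \<le> i \<and> i \<le> r + \<delta>" using v(1) i unfolding W_def by auto
    qed
  qed
  have AW: "A ` W \<subseteq> W"
  proof
    fix x assume "x \<in> A ` W"
    then obtain v where v: "v \<in> W" "x = A v" by auto
    show "x \<in> W" unfolding W_def
    proof (intro CollectI allI impI)
      fix i assume i: "i \<le> d" and nz: "Es i x \<noteq> 0"
      show "r \<le> i \<and> i \<le> r + \<delta>"
      proof (rule ccontr)
        assume out: "\<not> (r \<le> i \<and> i \<le> r + \<delta>)"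
        have "Es i x = Es i (A (\<Sum>j\<le>d. Es j v))" using v(2) sumEs by simp
        also have "\<dots> = (\<Sum>j\<le>d. Es i (A (Es j v)))"
          by (simp only: lin_facts(4)[OF linA, of "\<lambda>j. Es j v"] lin_facts(4)[OF linEs[rule_format, OF i], of "\<lambda>j. A (Es j v)"])
        also have "\<dots> = (\<Sum>j\<le>d. (0::'b))"
        proof (rule sum.cong[OF refl])
          fix j assume "j \<in> {..d}"
          then have j: "j \<le> d" by simp
          show "Es i (A (Es j v)) = 0"
          proof (cases "Es j v = 0")
            case True
            then show ?thesis using lin_facts(3)[OF linA] lin_facts(3)[OF linEs[rule_format, OF i]] by simp
          next
            case False
            then have jr: "r \<le> j" "j \<le> r + \<delta>" using v(1) j unfolding W_def by auto
            consider "i < r" | "i = r + \<delta> + 1" | "i \<ge> r + \<delta> + 2" using out by linarith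
            then show ?thesis
            proof cases
              case 1 then show ?thesis using below zeroP by blast
            next
              case 2 then show ?thesis using above zeroP i by blast
            next
              case 3
              then have "1 < \<bar>int i - int j\<bar>" using jr by linarith
              then show ?thesis using fun_cong[OF tri[rule_format, OF i j], of v] by simp
            qed
          qed
        qed
        finally show False using nz by simp
      qed
    qed
  qed
  have EW: "\<And>j. j \<le> d \<Longrightarrow> E j ` W \<subseteq> W"
    using E_inv[OF vs linA EE sumE Adef dist Wsub AW] by blast
  have "W = {0} \<or> W = UNIV"
  proof -
    have h1: "\<forall>W. module.subspace scale W \<and> A ` W \<subseteq> W \<and> As ` W \<subseteq> W \<and>
          (\<forall>i\<le>d. E i ` W \<subseteq> W \<and> Es i ` W \<subseteq> W) \<longrightarrow> W = {0} \<or> W = UNIV"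
      using irr unfolding T_irreducible_def by (rule conjunct2)
    have h2: "module.subspace scale W \<and> A ` W \<subseteq> W \<and> As ` W \<subseteq> W \<and>
          (\<forall>i\<le>d. E i ` W \<subseteq> W \<and> Es i ` W \<subseteq> W)"
      using Wsub AW AsW EW EsW by blast
    show ?thesis using mp[OF spec[OF h1, of W] h2] .
  qed
  moreover obtain v1 where v1: "Es r v1 \<noteq> 0" using r(2) unfolding P_def by auto
  moreover have "Es r v1 \<in> W"
  proof -
    have "v1 \<in> W \<or> True" by simp
    show ?thesis unfolding W_def
    proof (intro CollectI allI impI)
      fix i assume i: "i \<le> d" and nz: "Es i (Es r v1) \<noteq> 0"
      have "Es i (Es r v1) = (if i = r then Es r v1 else 0)"
        using fun_cong[OF EsEs[rule_format, OF i r(1)], of v1] by (auto split: if_splits)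
      then have "i = r" using nz by (auto split: if_splits)
      then show "r \<le> i \<and> i \<le> r + \<delta>" by simp
    qed
  qed
  ultimately have WU: "W = UNIV" by (metis singletonD)
  show ?thesis
  proof (intro exI conjI allI impI)
    show "r + \<delta> \<le> d" using Qd unfolding Q_def by simp
    fix i assume i: "i \<le> d"
    show "(\<exists>v. Es i v \<noteq> 0) \<longleftrightarrow> r \<le> i \<and> i \<le> r + \<delta>"
    proof
      assume "\<exists>v. Es i v \<noteq> 0"
      then obtain v where "Es i v \<noteq> 0" by auto
      moreover have "v \<in> W" using WU by simp
      ultimately show "r \<le> i \<and> i \<le> r + \<delta>" using i unfolding W_def by auto
    next
      assume "r \<le> i \<and> i \<le> r + \<delta>"
      then show "\<exists>v. Es i v \<noteq> 0" using Qd unfolding Q_def P_def by auto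
    qed
  qed
qed

theorem lemma5p3:
  fixes scale :: "'a::field \<Rightarrow> 'v::ab_group_add \<Rightarrow> 'v"
    and d :: nat and th ths :: "nat \<Rightarrow> 'a"
    and A As :: "'v \<Rightarrow> 'v" and E Es :: "nat \<Rightarrow> 'v \<Rightarrow> 'v"
  assumes "TD_eigen_params d th ths"
    and "T_module scale d th ths A E As Es"
    and "finite_dim_space scale"
    and "T_irreducible scale d A E As Es"
  shows "(\<exists>r \<delta>::nat. r + \<delta> \<le> d \<and>
            (\<forall>i\<le>d. (\<exists>v. Es i v \<noteq> 0) \<longleftrightarrow> r \<le> i \<and> i \<le> r + \<delta>)) \<and>
         (\<exists>t \<delta>s::nat. t + \<delta>s \<le> d \<and>
            (\<forall>i\<le>d. (\<exists>v. E i v \<noteq> 0) \<longleftrightarrow> t \<le> i \<and> i \<le> t + \<delta>s))"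
proof -
  note M = assms(2)[unfolded T_module_def]
  have vs: "vector_space scale" using M by blast
  have linA: "Vector_Spaces.linear scale scale A" using M by blast
  have linAs: "Vector_Spaces.linear scale scale As" using M by blast
  have linE: "\<forall>i\<le>d. Vector_Spaces.linear scale scale (E i)" using M by blast
  have linEs: "\<forall>i\<le>d. Vector_Spaces.linear scale scale (Es i)" using M by blast
  have EE: "\<forall>i\<le>d. \<forall>j\<le>d. E i \<circ> E j = (if i = j then E i else (\<lambda>_. 0))" using M by blast
  have EsEs: "\<forall>i\<le>d. \<forall>j\<le>d. Es i \<circ> Es j = (if i = j then Es i else (\<lambda>_. 0))" using M by blast
  have sumE: "\<forall>v. (\<Sum>i\<le>d. E i v) = v" using M by blast
  have sumEs: "\<forall>v. (\<Sum>i\<le>d. Es i v) = v" using M by blast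
  have Adef: "\<forall>v. A v = (\<Sum>i\<le>d. scale (th i) (E i v))" using M by blast
  have Asdef: "\<forall>v. As v = (\<Sum>i\<le>d. scale (ths i) (Es i v))" using M by blast
  have R: "\<forall>i\<le>d. \<forall>j\<le>d. \<forall>k\<le>d. int k < \<bar>int i - int j\<bar> \<longrightarrow>
        Es i \<circ> (A ^^ k) \<circ> Es j = (\<lambda>_. 0) \<and> E i \<circ> (As ^^ k) \<circ> E j = (\<lambda>_. 0)"
    using M by blast
  have tri: "\<forall>i\<le>d. \<forall>j\<le>d. 1 < \<bar>int i - int j\<bar> \<longrightarrow> Es i \<circ> A \<circ> Es j = (\<lambda>_. 0)"
   and tris: "\<forall>i\<le>d. \<forall>j\<le>d. 1 < \<bar>int i - int j\<bar> \<longrightarrow> E i \<circ> As \<circ> E j = (\<lambda>_. 0)"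
  proof (safe)
    fix i j assume i: "i \<le> d" and j: "j \<le> d" and g: "1 < \<bar>int i - int j\<bar>"
    then have "1 \<le> d" by linarith
    then have "Es i \<circ> (A ^^ 1) \<circ> Es j = (\<lambda>_. 0) \<and> E i \<circ> (As ^^ 1) \<circ> E j = (\<lambda>_. 0)"
      using R i j g by (metis of_nat_1)
    then show "Es i \<circ> A \<circ> Es j = (\<lambda>_. 0)" "E i \<circ> As \<circ> E j = (\<lambda>_. 0)" by simp_all
  qed
  have dist: "\<forall>i\<le>d. \<forall>j\<le>d. i \<noteq> j \<longrightarrow> th i \<noteq> th j"
    and dists: "\<forall>i\<le>d. \<forall>j\<le>d. i \<noteq> j \<longrightarrow> ths i \<noteq> ths j"
    using assms(1) unfolding TD_eigen_params_def by blast+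
  have irr: "T_irreducible scale d A E As Es" by fact
  have irrs: "T_irreducible scale d As Es A E"
    using irr unfolding T_irreducible_def by blast
  show ?thesis
    using part1[OF vs linA linE linEs EE EsEs sumE sumEs Adef Asdef tri dist irr]
      part1[OF vs linAs linEs linE EsEs EE sumEs sumE Asdef Adef tris dists irrs]
    by blast
qed

end
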